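(* Let $G$ be a separable, locally compact, compactly generated, unimodular group with identity $e$ and Haar measure $\mu$. Let $\nu_1,\nu_2$ be probability measures on $G$ with densities $F_1,F_2$ with respect to $\mu$, where $F_1,F_2$ are symmetric, integrable and bounded on $G$. Suppose there exists an open relatively compact neighbourhood $U$ of $e$ which generates $G$ such that $\inf_{U^2}F_2\ge r>0$ for some $r$, and such that $F_1$ has a second moment relative to $U$, i.e. $\int_G |x|_U^2F_1(x)\,d\mu(x)<\infty$. Then there exists a constant $C>1$ such that $\varepsilon_{\nu_1}(f,f)\le C\,\varepsilon_{\nu_2}(f,f)$ for all $f\in L^2(G)$.
   Context: $|x|_U=\min\{n\in\mathbb N: x\in U^n\}$. $R_\nu h(x)=\int_G h(xy^{-1})\,d\nu(y)$ on $L^2(G)$, $\Delta_\nu=I-R_\nu$, and $\varepsilon_\nu(f,f)=(\Delta_\nu f\,|\,f)$ with $(\cdot|\cdot)$ the inner product of $L^2(G)$. $F$ symmetric means $F(x^{-1})=F(x)$. *)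

theory Defs
  imports "HOL-Analysis.Analysis" "HOL-Probability.Probability_Measure"
begin

text \<open>Groups are written additively (type class topological_group_add, which is NOT
  assumed commutative): the product x y is x + y, the identity e is 0, x y^{-1} is x - y.\<close>

fun setpow :: "'a::monoid_add set \<Rightarrow> nat \<Rightarrow> 'a set" where
  "setpow U 0 = {0}"
| "setpow U (Suc n) = {x + y | x y. x \<in> U \<and> y \<in> setpow U n}"

definition word_length :: "'a::monoid_add set \<Rightarrow> 'a \<Rightarrow> nat" where
  "word_length U x = (LEAST n. x \<in> setpow U n)"

definition generates :: "'a::monoid_add set \<Rightarrow> bool" where
  "generates U \<longleftrightarrow> (\<Union>n. setpow U n) = UNIV"

definition haar_measure :: "'a::topological_group_add measure \<Rightarrow> bool" where
  "haar_measure \<mu> \<longleftrightarrow>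
     sets \<mu> = sets borel \<and>
     (\<forall>K. compact K \<longrightarrow> emeasure \<mu> K < \<infinity>) \<and>
     (\<forall>V. open V \<and> V \<noteq> {} \<longrightarrow> emeasure \<mu> V > 0) \<and>
     (\<forall>x. \<forall>A \<in> sets borel. emeasure \<mu> ((\<lambda>y. x + y) ` A) = emeasure \<mu> A)"

definition unimodular :: "'a::topological_group_add measure \<Rightarrow> bool" where
  "unimodular \<mu> \<longleftrightarrow> (\<forall>x. \<forall>A \<in> sets borel. emeasure \<mu> ((\<lambda>y. y + x) ` A) = emeasure \<mu> A)"

definition compactly_generated :: "'a::{topological_group_add} itself \<Rightarrow> bool" where
  "compactly_generated _ \<longleftrightarrow>
     (\<exists>U::'a set. open U \<and> 0 \<in> U \<and> compact (closure U) \<and> generates U)"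

definition L2 :: "'a measure \<Rightarrow> ('a \<Rightarrow> real) \<Rightarrow> bool" where
  "L2 \<mu> f \<longleftrightarrow> f \<in> borel_measurable \<mu> \<and> integrable \<mu> (\<lambda>x. (f x)\<^sup>2)"

definition conv_op :: "'a::group_add measure \<Rightarrow> ('a \<Rightarrow> real) \<Rightarrow> 'a \<Rightarrow> real" where
  "conv_op \<nu> h x = (\<integral>y. h (x - y) \<partial>\<nu>)"

definition laplacian :: "'a::group_add measure \<Rightarrow> ('a \<Rightarrow> real) \<Rightarrow> 'a \<Rightarrow> real" where
  "laplacian \<nu> h x = h x - conv_op \<nu> h x"

definition dirichlet_form :: "'a measure \<Rightarrow> 'a::group_add measure \<Rightarrow> ('a \<Rightarrow> real) \<Rightarrow> real" where
  "dirichlet_form \<mu> \<nu> f = (\<integral>x. laplacian \<nu> f x * f x \<partial>\<mu>)"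

end

theory Submission
  imports Defs
begin

locale hs = sigma_finite_measure \<mu> for \<mu> :: "'a::{topological_group_add, t2_space, second_countable_topology} measure" +
  assumes sets_mu: "sets \<mu> = sets borel"
    and rinv: "\<forall>x. \<forall>A \<in> sets borel. emeasure \<mu> ((\<lambda>y. y + x) ` A) = emeasure \<mu> A"
begin

lemma meas_mu: "measurable \<mu> N = measurable borel N"
  by (rule measurable_cong_sets[OF sets_mu refl])

lemma meas_mu2: "measurable N \<mu> = measurable N borel"
  by (rule measurable_cong_sets[OF refl sets_mu])

lemma space_mu[simp]: "space \<mu> = UNIV"
  using sets_eq_imp_space_eq[OF sets_mu] by simp

lemma add_meas[measurable]: "(\<lambda>x::'a. x + c) \<in> borel_measurable borel"
  by (intro borel_measurable_continuous_onI continuous_intros)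

lemma distr_transl: "distr \<mu> \<mu> (\<lambda>x. x + c) = \<mu>"
proof (rule measure_eqI)
  show "sets (distr \<mu> \<mu> (\<lambda>x. x + c)) = sets \<mu>" by simp
  fix A assume "A \<in> sets (distr \<mu> \<mu> (\<lambda>x. x + c))"
  then have A: "A \<in> sets borel" using sets_mu by simp
  have m: "(\<lambda>x. x + c) \<in> measurable \<mu> \<mu>" unfolding meas_mu meas_mu2 by simp
  have "(\<lambda>x. x + c) -` A \<inter> space \<mu> = (\<lambda>y. y + (-c)) ` A"
    by (auto simp: image_iff) (metis add_diff_cancel)
  moreover have "emeasure \<mu> ((\<lambda>y. y + (-c)) ` A) = emeasure \<mu> A" using rinv A by blast
  ultimately show "emeasure (distr \<mu> \<mu> (\<lambda>x. x + c)) A = emeasure \<mu> A"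
    using A by (simp add: emeasure_distr[OF m] sets_mu del: diff_conv_add_uminus)
qed

lemma nn_transl:
  assumes "g \<in> borel_measurable borel"
  shows "(\<integral>\<^sup>+x. g (x + c) \<partial>\<mu>) = integral\<^sup>N \<mu> g"
proof -
  have m: "(\<lambda>x. x + c) \<in> measurable \<mu> \<mu>" unfolding meas_mu meas_mu2 by simp
  have "integral\<^sup>N (distr \<mu> \<mu> (\<lambda>x. x + c)) g = (\<integral>\<^sup>+x. g (x + c) \<partial>\<mu>)"
    by (rule nn_integral_distr[OF m]) (use assms sets_mu in \<open>simp add: meas_mu\<close>)
  then show ?thesis by (simp add: distr_transl)
qed

lemma int_transl:
  fixes g :: "'a \<Rightarrow> real"
  assumes "integrable \<mu> g"
  shows "integrable \<mu> (\<lambda>x. g (x + c))" "(\<integral>x. g (x + c) \<partial>\<mu>) = integral\<^sup>L \<mu> g"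
proof -
  have m: "(\<lambda>x. x + c) \<in> measurable \<mu> \<mu>" unfolding meas_mu meas_mu2 by simp
  have g: "g \<in> borel_measurable \<mu>" using assms by simp
  show "integrable \<mu> (\<lambda>x. g (x + c))"
    using integrable_distr_eq[OF m g] assms by (simp add: distr_transl)
  show "(\<integral>x. g (x + c) \<partial>\<mu>) = integral\<^sup>L \<mu> g"
    using integral_distr[OF m g] by (simp add: distr_transl)
qed

lemma diff_meas[measurable]: "(\<lambda>x::'a. x - c) \<in> borel_measurable borel"
  by (intro borel_measurable_continuous_onI continuous_intros)

lemma diff2_meas: "(\<lambda>p::'a\<times>'a. fst p - snd p) \<in> borel_measurable (borel \<Otimes>\<^sub>M borel)"
  unfolding borel_prod by (intro borel_measurable_continuous_onI continuous_intros)

lemma diff_meas'[measurable]: "(\<lambda>y::'a. c - y) \<in> borel_measurable borel"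
  by (intro borel_measurable_continuous_onI continuous_intros)

lemma diff_meas''[measurable]: "((-) c :: 'a \<Rightarrow> 'a) \<in> borel_measurable borel"
  using diff_meas' by (simp add: eta_contract_eq)

lemma abs_le_sq: "\<bar>a::real\<bar> \<le> 1 + a\<^sup>2"
proof (cases "\<bar>a\<bar> \<le> 1")
  case True
  then show ?thesis by (smt (verit) zero_le_power2)
next
  case False
  then have "\<bar>a\<bar> * 1 \<le> \<bar>a\<bar> * \<bar>a\<bar>" by (intro mult_left_mono) auto
  then show ?thesis by (simp add: power2_eq_square)
qed

definition D :: "('a \<Rightarrow> real) \<Rightarrow> 'a \<Rightarrow> real" where
  "D f y = (\<integral>x. (f x - f (x - y))\<^sup>2 \<partial>\<mu>)"

lemma sq_transl:
  assumes "L2 \<mu> f"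
  shows "integrable \<mu> (\<lambda>x. (f (x - c))\<^sup>2)" "(\<integral>x. (f (x - c))\<^sup>2 \<partial>\<mu>) = (\<integral>x. (f x)\<^sup>2 \<partial>\<mu>)"
  using int_transl[of "\<lambda>x. (f x)\<^sup>2" "-c"] assms unfolding L2_def by auto

lemma f_meas: "L2 \<mu> f \<Longrightarrow> f \<in> borel_measurable borel"
  unfolding L2_def meas_mu by simp

lemma sq2: "(p - q)\<^sup>2 \<le> 2*p\<^sup>2 + 2*(q::real)\<^sup>2"
proof -
  have "0 \<le> (p+q)\<^sup>2" by simp
  then show ?thesis unfolding power2_eq_square by (simp add: algebra_simps)
qed

lemma D_int:
  assumes "L2 \<mu> f"
  shows "integrable \<mu> (\<lambda>x. (f x - f (x - y))\<^sup>2)"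
proof (rule Bochner_Integration.integrable_bound)
  show "integrable \<mu> (\<lambda>x. 2 * (f x)\<^sup>2 + 2 * (f (x - y))\<^sup>2)"
    using assms sq_transl[OF assms] unfolding L2_def by auto
  have [measurable]: "f \<in> borel_measurable borel" using f_meas[OF assms] .
  show "(\<lambda>x. (f x - f (x - y))\<^sup>2) \<in> borel_measurable \<mu>" unfolding meas_mu by measurable
  show "AE x in \<mu>. norm ((f x - f (x - y))\<^sup>2) \<le> norm (2 * (f x)\<^sup>2 + 2 * (f (x - y))\<^sup>2)"
  proof (intro AE_I2)
    fix x
    have "(f x - f (x - y))\<^sup>2 \<le> 2 * (f x)\<^sup>2 + 2 * (f (x - y))\<^sup>2"
      by (rule sq2)
    then show "norm ((f x - f (x - y))\<^sup>2) \<le> norm (2 * (f x)\<^sup>2 + 2 * (f (x - y))\<^sup>2)" by simp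
  qed
qed

lemma D_nonneg: "D f y \<ge> 0"
  unfolding D_def by simp

lemma D_zero: "D f 0 = 0"
  unfolding D_def by simp

lemma D_neg:
  assumes "L2 \<mu> f"
  shows "D f (-y) = D f y"
proof -
  have e: "(\<lambda>x. (f (x + - y) - f (x + - y - - y))\<^sup>2) = (\<lambda>x. (f x - f (x - y))\<^sup>2)"
    by (rule ext) (metis power2_commute diff_add_cancel diff_conv_add_uminus minus_minus)
  have "D f (-y) = (\<integral>x. (f (x + - y) - f (x + - y - - y))\<^sup>2 \<partial>\<mu>)"
    unfolding D_def using int_transl(2)[OF D_int[OF assms, of "-y"], of "-y"] by simp
  also have "\<dots> = D f y" unfolding D_def e ..
  finally show ?thesis .
qed

lemma sq_ineq:
  fixes p q t :: real
  assumes "t > 0"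
  shows "(p + q)\<^sup>2 \<le> (1 + t) * p\<^sup>2 + (1 + 1/t) * q\<^sup>2"
proof -
  have "t * (p + q)\<^sup>2 \<le> t * ((1 + t) * p\<^sup>2 + (1 + 1/t) * q\<^sup>2)"
  proof -
    have "t * ((1 + t) * p\<^sup>2 + (1 + 1/t) * q\<^sup>2) = t * p\<^sup>2 + t*t*p\<^sup>2 + t * q\<^sup>2 + q\<^sup>2"
      using assms by (simp add: distrib_left distrib_right)
    moreover have "(t*p - q)\<^sup>2 = t*t*p\<^sup>2 - 2*t*(p*q) + q\<^sup>2" "(p+q)\<^sup>2 = p\<^sup>2 + 2*(p*q) + q\<^sup>2"
      by (simp_all add: power2_eq_square algebra_simps)
    moreover have "0 \<le> (t*p - q)\<^sup>2" by simp
    ultimately show ?thesis by (simp add: distrib_left)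
  qed
  then show ?thesis using assms by (simp add: mult_le_cancel_left_pos)
qed

lemma D_tri:
  assumes "L2 \<mu> f" "t > 0"
  shows "D f (a + b) \<le> (1 + t) * D f b + (1 + 1/t) * D f a"
proof -
  have eq: "x - (a + b) = x - b - a" for x :: 'a
    by (metis diff_conv_add_uminus minus_add add.assoc)
  have "D f (a + b) \<le> (\<integral>x. (1 + t) * (f x - f (x - b))\<^sup>2 + (1 + 1/t) * (f (x - b) - f (x - b - a))\<^sup>2 \<partial>\<mu>)"
    unfolding D_def
  proof (rule integral_mono)
    show "integrable \<mu> (\<lambda>x. (f x - f (x - (a + b)))\<^sup>2)" by (rule D_int[OF assms(1)])
    show "integrable \<mu> (\<lambda>x. (1 + t) * (f x - f (x - b))\<^sup>2 + (1 + 1/t) * (f (x - b) - f (x - b - a))\<^sup>2)"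
      using D_int[OF assms(1), of b] int_transl(1)[OF D_int[OF assms(1), of a], of "-b"]
      by (intro Bochner_Integration.integrable_add integrable_mult_right) simp_all
    fix x
    show "(f x - f (x - (a + b)))\<^sup>2 \<le> (1 + t) * (f x - f (x - b))\<^sup>2 + (1 + 1/t) * (f (x - b) - f (x - b - a))\<^sup>2"
      using sq_ineq[OF assms(2), of "f x - f (x - b)" "f (x - b) - f (x - b - a)"] by (simp add: eq)
  qed
  also have "\<dots> = (1 + t) * D f b + (1 + 1/t) * D f a"
    unfolding D_def
    using D_int[OF assms(1), of b] int_transl[OF D_int[OF assms(1), of a], of "-b"]
    by (subst Bochner_Integration.integral_add) simp_all
  finally show ?thesis .
qed

lemma D_pow:
  assumes f: "L2 \<mu> f" and B: "B \<ge> 0" and DU: "\<forall>u\<in>U. D f u \<le> B"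
  shows "y \<in> setpow U n \<Longrightarrow> D f y \<le> (real n)\<^sup>2 * B"
proof (induction n arbitrary: y)
  case 0
  then show ?case by (simp add: D_zero)
next
  case (Suc n)
  then obtain u z where y: "y = u + z" and u: "u \<in> U" and z: "z \<in> setpow U n" by auto
  have IH: "D f z \<le> (real n)\<^sup>2 * B" using Suc.IH[OF z] .
  show ?case
  proof (cases "n = 0")
    case True
    then have "z = 0" using z by simp
    then show ?thesis using y DU u True by simp
  next
    case False
    then have t: "1 / real n > 0" by simp
    have "D f y \<le> (1 + 1 / real n) * D f z + (1 + 1 / (1 / real n)) * D f u"
      unfolding y by (rule D_tri[OF f t])
    also have "\<dots> \<le> (1 + 1 / real n) * ((real n)\<^sup>2 * B) + (1 + real n) * B"
      using IH DU u t by (intro add_mono mult_left_mono) auto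
    also have "\<dots> = (real (Suc n))\<^sup>2 * B"
      using False by (simp add: power2_eq_square field_simps)
    finally show ?thesis .
  qed
qed

end

lemma meas_prod:
  assumes "sets M = sets borel" "sets N = sets borel"
  shows "measurable (M \<Otimes>\<^sub>M N) K = measurable (borel :: ('a::second_countable_topology \<times> 'b::second_countable_topology) measure) K"
proof -
  have "sets (M \<Otimes>\<^sub>M N) = sets (borel \<Otimes>\<^sub>M borel)"
    by (rule sets_pair_measure_cong[OF assms])
  then show ?thesis unfolding borel_prod by (rule measurable_cong_sets[OF _ refl])
qed

lemma fst_meas[measurable]: "(fst :: ('a::second_countable_topology \<times> 'b::second_countable_topology) \<Rightarrow> _) \<in> borel_measurable borel"
  by (intro borel_measurable_continuous_onI continuous_intros)
lemma snd_meas[measurable]: "(snd :: ('a::second_countable_topology \<times> 'b::second_countable_topology) \<Rightarrow> _) \<in> borel_measurable borel"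
  by (intro borel_measurable_continuous_onI continuous_intros)
lemma diff_meas2[measurable]: "(\<lambda>p::('a::{topological_group_add,second_countable_topology} \<times> 'a). fst p - snd p) \<in> borel_measurable borel"
  by (intro borel_measurable_continuous_onI continuous_intros)
lemma diff_meas3[measurable]: "(\<lambda>p::('a::{topological_group_add,second_countable_topology} \<times> 'a). snd p - fst p) \<in> borel_measurable borel"
  by (intro borel_measurable_continuous_onI continuous_intros)

context hs begin

lemma D_meas:
  assumes "L2 \<mu> f"
  shows "D f \<in> borel_measurable borel"
proof -
  have [measurable]: "f \<in> borel_measurable borel" using f_meas[OF assms] .
  have "(\<lambda>(y, x). (f x - f (x - y))\<^sup>2) \<in> borel_measurable (borel \<Otimes>\<^sub>M \<mu>)"
    unfolding meas_prod[OF refl sets_mu] case_prod_beta' by measurable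
  then show ?thesis unfolding D_def by (rule borel_measurable_lebesgue_integral)
qed


lemma eps_formula:
  assumes f: "L2 \<mu> f" and nu: "prob_space \<nu>" and snu: "sets \<nu> = sets borel"
  shows "integrable \<nu> (D f)" "dirichlet_form \<mu> \<nu> f = (\<integral>y. D f y \<partial>\<nu>) / 2"
proof -
  interpret nu: prob_space \<nu> by fact
  interpret p: pair_sigma_finite \<mu> \<nu> by unfold_locales
  have mf[measurable]: "f \<in> borel_measurable borel" using f_meas[OF f] .
  have spnu[simp]: "space \<nu> = UNIV" using sets_eq_imp_space_eq[OF snu] by simp
  have mnu: "measurable \<nu> K = measurable borel K" for K :: "'b measure"
    by (rule measurable_cong_sets[OF snu refl])
  note mp = meas_prod[OF sets_mu snu]
  define nf where "nf = (\<integral>x. (f x)\<^sup>2 \<partial>\<mu>)"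
  have sq_int: "integrable \<mu> (\<lambda>x. (f x)\<^sup>2)" using f unfolding L2_def by simp
  have nf_nn: "nf \<ge> 0" unfolding nf_def by simp
  have T1: "(\<integral>\<^sup>+x. \<integral>\<^sup>+y. ennreal ((f (x - y))\<^sup>2) \<partial>\<nu> \<partial>\<mu>) = ennreal nf"
  proof -
    have m: "(\<lambda>p. ennreal ((f (fst p - snd p))\<^sup>2)) \<in> borel_measurable (\<mu> \<Otimes>\<^sub>M \<nu>)"
      unfolding mp by measurable
    have "(\<integral>\<^sup>+x. \<integral>\<^sup>+y. ennreal ((f (x - y))\<^sup>2) \<partial>\<nu> \<partial>\<mu>) = (\<integral>\<^sup>+y. \<integral>\<^sup>+x. ennreal ((f (x - y))\<^sup>2) \<partial>\<mu> \<partial>\<nu>)"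
      using p.Fubini[OF m] by simp
    also have "\<dots> = (\<integral>\<^sup>+y. ennreal nf \<partial>\<nu>)"
    proof (intro nn_integral_cong)
      fix y
      show "(\<integral>\<^sup>+x. ennreal ((f (x - y))\<^sup>2) \<partial>\<mu>) = ennreal nf"
        using nn_integral_eq_integral[OF sq_transl(1)[OF f, of y]] sq_transl(2)[OF f, of y]
        unfolding nf_def by simp
    qed
    also have "\<dots> = ennreal nf" using nu.emeasure_space_1 by simp
    finally show ?thesis .
  qed
  have AEx: "AE x in \<mu>. integrable \<nu> (\<lambda>y. (f (x - y))\<^sup>2) \<and> integrable \<nu> (\<lambda>y. f (x - y))"
  proof -
    have "AE x in \<mu>. (\<integral>\<^sup>+y. ennreal ((f (x - y))\<^sup>2) \<partial>\<nu>) \<noteq> \<infinity>"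
    proof (rule nn_integral_PInf_AE)
      show "(\<lambda>x. \<integral>\<^sup>+y. ennreal ((f (x - y))\<^sup>2) \<partial>\<nu>) \<in> borel_measurable \<mu>"
        by (rule nu.borel_measurable_nn_integral) (unfold mp case_prod_beta', measurable)
      show "(\<integral>\<^sup>+x. \<integral>\<^sup>+y. ennreal ((f (x - y))\<^sup>2) \<partial>\<nu> \<partial>\<mu>) \<noteq> \<infinity>" using T1 by simp
    qed
    then show ?thesis
    proof (rule AE_mp, intro AE_I2 impI conjI)
      fix x assume fin: "(\<integral>\<^sup>+y. ennreal ((f (x - y))\<^sup>2) \<partial>\<nu>) \<noteq> \<infinity>"
      show i2: "integrable \<nu> (\<lambda>y. (f (x - y))\<^sup>2)"
      proof (intro integrableI_nonneg)
        show "(\<lambda>y. (f (x - y))\<^sup>2) \<in> borel_measurable \<nu>" unfolding mnu by measurable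
      qed (use fin in \<open>auto simp: top.not_eq_extremum\<close>)
      show "integrable \<nu> (\<lambda>y. f (x - y))"
      proof (rule Bochner_Integration.integrable_bound)
        show "integrable \<nu> (\<lambda>y. 1 + (f (x - y))\<^sup>2)" using i2 by simp
        show "(\<lambda>y. f (x - y)) \<in> borel_measurable \<nu>" unfolding mnu by measurable
        show "AE y in \<nu>. norm (f (x - y)) \<le> norm (1 + (f (x - y))\<^sup>2)"
        proof (intro AE_I2)
          fix y
          have "\<bar>f (x - y)\<bar> \<le> 1 + (f (x - y))\<^sup>2"
            by (rule abs_le_sq)
          then show "norm (f (x - y)) \<le> norm (1 + (f (x - y))\<^sup>2)" by simp
        qed
      qed
    qed
  qed
  define c where "c x = conv_op \<nu> f x" for x
  define Q where "Q x = (\<integral>y. (f (x - y))\<^sup>2 \<partial>\<nu>)" for x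
  define P where "P x = (\<integral>y. (f x - f (x - y))\<^sup>2 \<partial>\<nu>)" for x
  have lap_eq: "AE x in \<mu>. laplacian \<nu> f x * f x = (P x + (f x)\<^sup>2 - Q x) / 2"
    using AEx
  proof (rule AE_mp, intro AE_I2 impI)
    fix x assume a: "integrable \<nu> (\<lambda>y. (f (x - y))\<^sup>2) \<and> integrable \<nu> (\<lambda>y. f (x - y))"
    have e: "(\<lambda>y. (f x - f (x - y))\<^sup>2) = (\<lambda>y. ((f x)\<^sup>2 - 2 * f x * f (x - y)) + (f (x - y))\<^sup>2)"
      by (rule ext) (simp add: power2_diff)
    have "P x = (\<integral>y. ((f x)\<^sup>2 - 2 * f x * f (x - y)) \<partial>\<nu>) + Q x"
      unfolding P_def Q_def e using a
      by (intro Bochner_Integration.integral_add) auto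
    also have "(\<integral>y. ((f x)\<^sup>2 - 2 * f x * f (x - y)) \<partial>\<nu>) = (f x)\<^sup>2 - 2 * f x * c x"
      unfolding c_def conv_op_def using a
      by (subst Bochner_Integration.integral_diff) (auto simp: nu.prob_space[unfolded spnu])
    finally show "laplacian \<nu> f x * f x = (P x + (f x)\<^sup>2 - Q x) / 2"
      unfolding laplacian_def c_def[symmetric] by (simp add: algebra_simps power2_eq_square)
  qed
  have mQ: "Q \<in> borel_measurable \<mu>" unfolding Q_def
    by (rule nu.borel_measurable_lebesgue_integral) (unfold mp case_prod_beta', measurable)
  have mP: "P \<in> borel_measurable \<mu>" unfolding P_def
    by (rule nu.borel_measurable_lebesgue_integral) (unfold mp case_prod_beta', measurable)
  have mc: "c \<in> borel_measurable \<mu>" unfolding c_def conv_op_def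
    by (rule nu.borel_measurable_lebesgue_integral) (unfold mp case_prod_beta', measurable)
  have mL: "(\<lambda>x. laplacian \<nu> f x * f x) \<in> borel_measurable \<mu>"
    using mc unfolding laplacian_def c_def[symmetric] meas_mu by measurable
  have Q_nn: "(\<integral>\<^sup>+x. ennreal (Q x) \<partial>\<mu>) = ennreal nf"
  proof -
    have "(\<integral>\<^sup>+x. ennreal (Q x) \<partial>\<mu>) = (\<integral>\<^sup>+x. \<integral>\<^sup>+y. ennreal ((f (x - y))\<^sup>2) \<partial>\<nu> \<partial>\<mu>)"
      using AEx
    proof (intro nn_integral_cong_AE, rule AE_mp, intro AE_I2 impI)
      fix x assume a: "integrable \<nu> (\<lambda>y. (f (x - y))\<^sup>2) \<and> integrable \<nu> (\<lambda>y. f (x - y))"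
      show "ennreal (Q x) = (\<integral>\<^sup>+y. ennreal ((f (x - y))\<^sup>2) \<partial>\<nu>)"
        unfolding Q_def using a by (subst nn_integral_eq_integral) auto
    qed
    then show ?thesis using T1 by simp
  qed
  have Q_int: "integrable \<mu> Q"
    by (rule integrableI_nonneg[OF mQ]) (use Q_nn in \<open>auto simp: Q_def\<close>)
  have Q_val: "integral\<^sup>L \<mu> Q = nf"
    using integral_eq_nn_integral[OF mQ] Q_nn nf_nn by (simp add: Q_def)
  have D_bd: "D f y \<le> 4 * nf" for y
  proof -
    have "D f y \<le> (\<integral>x. 2 * (f x)\<^sup>2 + 2 * (f (x - y))\<^sup>2 \<partial>\<mu>)"
      unfolding D_def using D_int[OF f] sq_int sq_transl[OF f]
      by (intro integral_mono) (auto intro: sq2)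
    also have "\<dots> = 4 * nf"
      using sq_int sq_transl[OF f] unfolding nf_def by simp
    finally show ?thesis .
  qed
  have mD: "D f \<in> borel_measurable \<nu>" using D_meas[OF f] unfolding mnu .
  show Dint: "integrable \<nu> (D f)"
    using D_bd D_nonneg by (intro nu.integrable_const_bound[OF _ mD, of "4 * nf"]) auto
  have P_nn: "(\<integral>\<^sup>+x. ennreal (P x) \<partial>\<mu>) = ennreal (\<integral>y. D f y \<partial>\<nu>)"
  proof -
    have "(\<integral>\<^sup>+x. ennreal (P x) \<partial>\<mu>) = (\<integral>\<^sup>+x. \<integral>\<^sup>+y. ennreal ((f x - f (x - y))\<^sup>2) \<partial>\<nu> \<partial>\<mu>)"
      using AEx
    proof (intro nn_integral_cong_AE, rule AE_mp, intro AE_I2 impI)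
      fix x assume a: "integrable \<nu> (\<lambda>y. (f (x - y))\<^sup>2) \<and> integrable \<nu> (\<lambda>y. f (x - y))"
      have "integrable \<nu> (\<lambda>y. (f x - f (x - y))\<^sup>2)"
      proof (rule Bochner_Integration.integrable_bound)
        show "integrable \<nu> (\<lambda>y. 2 * (f x)\<^sup>2 + 2 * (f (x - y))\<^sup>2)" using a by simp
        show "(\<lambda>y. (f x - f (x - y))\<^sup>2) \<in> borel_measurable \<nu>" unfolding mnu by measurable
        show "AE y in \<nu>. norm ((f x - f (x - y))\<^sup>2) \<le> norm (2 * (f x)\<^sup>2 + 2 * (f (x - y))\<^sup>2)"
          by (intro AE_I2) (simp add: sq2)
      qed
      then show "ennreal (P x) = (\<integral>\<^sup>+y. ennreal ((f x - f (x - y))\<^sup>2) \<partial>\<nu>)"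
        unfolding P_def by (subst nn_integral_eq_integral) auto
    qed
    also have "\<dots> = (\<integral>\<^sup>+y. \<integral>\<^sup>+x. ennreal ((f x - f (x - y))\<^sup>2) \<partial>\<mu> \<partial>\<nu>)"
    proof -
      have m: "(\<lambda>p. ennreal ((f (fst p) - f (fst p - snd p))\<^sup>2)) \<in> borel_measurable (\<mu> \<Otimes>\<^sub>M \<nu>)"
        unfolding mp by measurable
      show ?thesis using p.Fubini[OF m] by simp
    qed
    also have "\<dots> = (\<integral>\<^sup>+y. ennreal (D f y) \<partial>\<nu>)"
      unfolding D_def using D_int[OF f]
      by (intro nn_integral_cong) (subst nn_integral_eq_integral, auto)
    also have "\<dots> = ennreal (\<integral>y. D f y \<partial>\<nu>)"
      using Dint D_nonneg by (intro nn_integral_eq_integral) auto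
    finally show ?thesis .
  qed
  have P_nonneg: "P x \<ge> 0" for x unfolding P_def by simp
  have P_int: "integrable \<mu> P"
    by (rule integrableI_nonneg[OF mP]) (use P_nn P_nonneg in auto)
  have P_val: "integral\<^sup>L \<mu> P = (\<integral>y. D f y \<partial>\<nu>)"
    using integral_eq_nn_integral[OF mP] P_nn P_nonneg D_nonneg
    by (simp add: integral_nonneg_AE)
  have "dirichlet_form \<mu> \<nu> f = (\<integral>x. (P x + (f x)\<^sup>2 - Q x) / 2 \<partial>\<mu>)"
    unfolding dirichlet_form_def
  proof (rule integral_cong_AE[OF mL _ lap_eq])
    show "(\<lambda>x. (P x + (f x)\<^sup>2 - Q x) / 2) \<in> borel_measurable \<mu>"
      using mP mQ sq_int by measurable
  qed
  also have "\<dots> = (integral\<^sup>L \<mu> P + nf - integral\<^sup>L \<mu> Q) / 2"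
    using P_int Q_int sq_int unfolding nf_def by simp
  finally show "dirichlet_form \<mu> \<nu> f = (\<integral>y. D f y \<partial>\<nu>) / 2"
    using P_val Q_val by simp
qed


lemma setpow1: "setpow U (Suc 0) = U"
  by auto

lemma D_U_bound:
  assumes f: "L2 \<mu> f" and Fm: "F \<in> borel_measurable borel"
    and FD: "integrable \<mu> (\<lambda>v. F v * D f v)" and Fnn: "\<And>x. F x \<ge> 0"
    and Fr: "\<forall>x \<in> setpow U 2. F x \<ge> r" and r: "r > 0" and U0: "0 \<in> U"
    and Um: "U \<in> sets borel" and Ufin: "emeasure \<mu> U < \<infinity>" and u: "u \<in> U"
  shows "measure \<mu> U * D f u \<le> (4 / r) * (\<integral>v. F v * D f v \<partial>\<mu>)"
proof -
  have UU: "a + b \<in> setpow U 2" if "a \<in> U" "b \<in> U" for a b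
    using that by (auto simp: numeral_2_eq_2 setpow1)
  have Ub: "U \<in> sets \<mu>" using Um sets_mu by simp
  have "measure \<mu> U * D f u = (\<integral>v. D f u * indicator U v \<partial>\<mu>)"
    using Ub Ufin by (simp add: measure_def ac_simps)
  also have "\<dots> \<le> (\<integral>v. (2 / r) * (F v * D f v) + (2 / r) * (F (v + u) * D f (v + u)) \<partial>\<mu>)"
  proof (rule integral_mono)
    show "integrable \<mu> (\<lambda>v. D f u * indicator U v)"
      using Ub Ufin by (intro integrable_mult_right integrable_real_indicator) auto
    show "integrable \<mu> (\<lambda>v. (2 / r) * (F v * D f v) + (2 / r) * (F (v + u) * D f (v + u)))"
      using FD int_transl(1)[OF FD, of u] by auto
    fix v
    show "D f u * indicator U v \<le> (2 / r) * (F v * D f v) + (2 / r) * (F (v + u) * D f (v + u))"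
    proof (cases "v \<in> U")
      case False
      have "0 \<le> (2 / r) * (F v * D f v) + (2 / r) * (F (v + u) * D f (v + u))"
        using Fnn D_nonneg r by (intro add_nonneg_nonneg mult_nonneg_nonneg) auto
      then show ?thesis using False by simp
    next
      case True
      have Fv: "F v \<ge> r" using Fr UU[OF True U0] by simp
      have Fvu: "F (v + u) \<ge> r" using Fr UU[OF True u] by simp
      have "D f u = D f (- v + (v + u))" by (simp add: add.assoc[symmetric])
      also have "\<dots> \<le> (1 + 1) * D f (v + u) + (1 + 1/1) * D f (- v)"
        by (rule D_tri[OF f]) simp
      also have "\<dots> = 2 * D f v + 2 * D f (v + u)" using D_neg[OF f] by simp
      finally have "D f u \<le> 2 * D f v + 2 * D f (v + u)" .
      moreover have "r * D f v \<le> F v * D f v" using Fv D_nonneg by (intro mult_right_mono) auto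
      moreover have "r * D f (v + u) \<le> F (v + u) * D f (v + u)" using Fvu D_nonneg by (intro mult_right_mono) auto
      ultimately have "r * D f u \<le> r * (2 * D f v + 2 * D f (v + u))" 
        and "r * D f v \<le> F v * D f v" "r * D f (v + u) \<le> F (v + u) * D f (v + u)"
        using r by (auto intro: mult_left_mono)
      then have "r * D f u \<le> 2 * (F v * D f v) + 2 * (F (v + u) * D f (v + u))"
        by (simp add: distrib_left)
      then show ?thesis using True r by (simp add: field_simps)
    qed
  qed
  also have "\<dots> = (4 / r) * (\<integral>v. F v * D f v \<partial>\<mu>)"
    using FD int_transl[OF FD, of u] by simp
  finally show ?thesis .
qed


end

lemma setpow_mono: "A \<subseteq> B \<Longrightarrow> setpow A n \<subseteq> setpow B n"
  by (induction n) auto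

lemma setpow_compact:
  fixes K :: "'a::topological_group_add set"
  assumes "compact K" shows "compact (setpow K n)"
proof (induction n)
  case 0 then show ?case by simp
next
  case (Suc n)
  have "setpow K (Suc n) = (\<lambda>p. fst p + snd p) ` (K \<times> setpow K n)" by force
  moreover have "compact ((\<lambda>p. fst p + snd p) ` (K \<times> setpow K n))"
    by (intro compact_continuous_image compact_Times assms Suc continuous_intros)
  ultimately show ?case by simp
qed

theorem proposition4:
  fixes \<mu> :: "'a::{topological_group_add, t2_space, second_countable_topology} measure"
    and F1 F2 :: "'a \<Rightarrow> real"
    and U :: "'a set"
    and r :: real
  assumes loc_compact: "locally compact (UNIV :: 'a set)"
    and comp_gen: "compactly_generated TYPE('a)"
    and haar: "haar_measure \<mu>"
    and unimod: "unimodular \<mu>"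
    and F1_nonneg: "\<And>x. F1 x \<ge> 0" and F2_nonneg: "\<And>x. F2 x \<ge> 0"
    and prob1: "prob_space (density \<mu> (\<lambda>x. ennreal (F1 x)))"
    and prob2: "prob_space (density \<mu> (\<lambda>x. ennreal (F2 x)))"
    and sym1: "\<And>x. F1 (- x) = F1 x" and sym2: "\<And>x. F2 (- x) = F2 x"
    and int1: "integrable \<mu> F1" and int2: "integrable \<mu> F2"
    and bdd1: "bounded (range F1)" and bdd2: "bounded (range F2)"
    and U_open: "open U" and U_e: "0 \<in> U" and U_relcpt: "compact (closure U)"
    and U_gen: "generates U"
    and r_pos: "r > 0"
    and F2_lower: "\<forall>x \<in> setpow U 2. F2 x \<ge> r"
    and moment: "integrable \<mu> (\<lambda>x. (real (word_length U x))\<^sup>2 * F1 x)"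
  shows "\<exists>C > 1. \<forall>f. L2 \<mu> f \<longrightarrow>
           dirichlet_form \<mu> (density \<mu> (\<lambda>x. ennreal (F1 x))) f
             \<le> C * dirichlet_form \<mu> (density \<mu> (\<lambda>x. ennreal (F2 x))) f"
proof -
  have smu: "sets \<mu> = sets borel" using haar unfolding haar_measure_def by simp
  have spmu: "space \<mu> = UNIV" using sets_eq_imp_space_eq[OF smu] by simp
  have cfin: "compact K \<Longrightarrow> emeasure \<mu> K < \<infinity>" for K using haar unfolding haar_measure_def by simp
  have sf: "sigma_finite_measure \<mu>"
  proof (unfold_locales, intro exI[of _ "range (setpow (closure U))"] conjI)
    show "countable (range (setpow (closure U)))" by simp
    show "range (setpow (closure U)) \<subseteq> sets \<mu>"
    proof (rule image_subsetI)
      fix n show "setpow (closure U) n \<in> sets \<mu>" unfolding smu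
        by (intro borel_closed compact_imp_closed setpow_compact U_relcpt)
    qed
    show "\<Union> (range (setpow (closure U))) = space \<mu>"
    proof -
      have "x \<in> \<Union> (range (setpow (closure U)))" for x
      proof -
        obtain n where "x \<in> setpow U n" using U_gen unfolding generates_def by (metis UNIV_I UN_E)
        then have "x \<in> setpow (closure U) n" using setpow_mono[OF closure_subset] by blast
        then show ?thesis by blast
      qed
      then show ?thesis unfolding spmu by blast
    qed
    show "\<forall>a\<in>range (setpow (closure U)). emeasure \<mu> a \<noteq> \<infinity>"
    proof
      fix a assume "a \<in> range (setpow (closure U))"
      then obtain n where "a = setpow (closure U) n" by blast
      then show "emeasure \<mu> a \<noteq> \<infinity>" using cfin[OF setpow_compact[OF U_relcpt, of n]] by simp
    qed
  qed
  interpret hs \<mu>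
    using sf smu unimod unfolding hs_def hs_axioms_def unimodular_def by blast
  have F1m: "F1 \<in> borel_measurable borel" using int1 meas_mu by auto
  have F2m: "F2 \<in> borel_measurable borel" using int2 meas_mu by auto
  define \<nu>1 where "\<nu>1 = density \<mu> (\<lambda>x. ennreal (F1 x))"
  define \<nu>2 where "\<nu>2 = density \<mu> (\<lambda>x. ennreal (F2 x))"
  have s1: "sets \<nu>1 = sets borel" unfolding \<nu>1_def using smu by simp
  have s2: "sets \<nu>2 = sets borel" unfolding \<nu>2_def using smu by simp
  have Ub: "U \<in> sets borel" using U_open by simp
  have Ufin: "emeasure \<mu> U < \<infinity>"
  proof -
    have "emeasure \<mu> U \<le> emeasure \<mu> (closure U)"
      by (rule emeasure_mono[OF closure_subset]) (simp add: smu)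
    then show ?thesis using cfin[OF U_relcpt] by simp
  qed
  have Upos: "emeasure \<mu> U > 0" using haar U_open U_e unfolding haar_measure_def by blast
  define m where "m = measure \<mu> U"
  have m_pos: "m > 0" unfolding m_def measure_def using Ufin Upos
    by (simp add: enn2real_positive_iff)
  define M1 where "M1 = (\<integral>x. (real (word_length U x))\<^sup>2 * F1 x \<partial>\<mu>)"
  have M1_nn: "M1 \<ge> 0" unfolding M1_def using F1_nonneg by simp
  define K where "K = 8 / (r * m)"
  have K_pos: "K > 0" unfolding K_def using r_pos m_pos by simp
  define C where "C = 2 + K * M1 / 2"
  have C1: "C > 1"
  proof -
    have "0 \<le> K * M1" using K_pos M1_nn by simp
    then show ?thesis unfolding C_def by linarith
  qed
  have wl: "y \<in> setpow U (word_length U y)" for y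
  proof -
    have "\<exists>n. y \<in> setpow U n" using U_gen unfolding generates_def by blast
    then show ?thesis unfolding word_length_def by (rule LeastI_ex)
  qed
  show ?thesis
  proof (intro exI[of _ C] conjI allI impI C1)
    fix f assume f: "L2 \<mu> f"
    note E1 = eps_formula[OF f prob1 s1[unfolded \<nu>1_def]]
    note E2 = eps_formula[OF f prob2 s2[unfolded \<nu>2_def]]
    have I1: "integrable \<mu> (\<lambda>v. F1 v * D f v)"
      using E1(1) F1_nonneg F1m D_meas[OF f] by (subst (asm) integrable_density) (auto simp: meas_mu)
    have I2: "integrable \<mu> (\<lambda>v. F2 v * D f v)"
      using E2(1) F2_nonneg F2m D_meas[OF f] by (subst (asm) integrable_density) (auto simp: meas_mu)
    have e1: "dirichlet_form \<mu> (density \<mu> (\<lambda>x. ennreal (F1 x))) f = (\<integral>v. F1 v * D f v \<partial>\<mu>) / 2"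
      using E1(2) F1_nonneg F1m D_meas[OF f] by (subst (asm) integral_density) (auto simp: meas_mu)
    have e2: "dirichlet_form \<mu> (density \<mu> (\<lambda>x. ennreal (F2 x))) f = (\<integral>v. F2 v * D f v \<partial>\<mu>) / 2"
      using E2(2) F2_nonneg F2m D_meas[OF f] by (subst (asm) integral_density) (auto simp: meas_mu)
    define E where "E = dirichlet_form \<mu> (density \<mu> (\<lambda>x. ennreal (F2 x))) f"
    have E_nn: "E \<ge> 0" unfolding E_def e2 using F2_nonneg D_nonneg by simp
    have DU: "\<forall>u\<in>U. D f u \<le> K * E"
    proof
      fix u assume u: "u \<in> U"
      have "m * D f u \<le> (4 / r) * (2 * E)"
        using D_U_bound[OF f F2m I2 F2_nonneg F2_lower r_pos U_e Ub Ufin u]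
        unfolding m_def E_def e2 by simp
      then show "D f u \<le> K * E" unfolding K_def using m_pos r_pos
        by (simp add: field_simps)
    qed
    have Dy: "D f y \<le> (real (word_length U y))\<^sup>2 * (K * E)" for y
      using D_pow[OF f _ DU wl[of y]] K_pos E_nn by simp
    have "(\<integral>v. F1 v * D f v \<partial>\<mu>) \<le> (\<integral>v. ((real (word_length U v))\<^sup>2 * F1 v) * (K * E) \<partial>\<mu>)"
    proof (rule integral_mono[OF I1])
      show "integrable \<mu> (\<lambda>v. ((real (word_length U v))\<^sup>2 * F1 v) * (K * E))"
        using moment by simp
      fix v show "F1 v * D f v \<le> ((real (word_length U v))\<^sup>2 * F1 v) * (K * E)"
        using mult_left_mono[OF Dy[of v] F1_nonneg[of v]] by (simp add: ac_simps)
    qed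
    also have "\<dots> = M1 * (K * E)" unfolding M1_def by simp
    finally have "dirichlet_form \<mu> (density \<mu> (\<lambda>x. ennreal (F1 x))) f \<le> (K * M1 / 2) * E"
      unfolding e1 by (simp add: ac_simps)
    also have "\<dots> \<le> C * E" unfolding C_def using E_nn by (intro mult_right_mono) auto
    finally show "dirichlet_form \<mu> (density \<mu> (\<lambda>x. ennreal (F1 x))) f
             \<le> C * dirichlet_form \<mu> (density \<mu> (\<lambda>x. ennreal (F2 x))) f" unfolding E_def .
  qed
qed

end
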